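(* Let $\Gamma$ be a distance-regular graph with intersection array $\{b_0,b_1,\dots,b_{D-1};c_1,\dots,c_D\}$ and let $(u_{ij})$ be the generators of $C(G_{aut}^+(\Gamma))$. Let $2\le m\le D$ with $c_m\ge 2$, and assume $u_{ij}u_{kl}=u_{kl}u_{ij}$ for all vertices $i,j,k,l$ with $d(i,k)=d(j,l)=m-1$. If one of the following holds: (a) $c_2=1$ and $b_1+1=b_0$; (b) $c_2=1$ and $b_1+2=b_0$; (c) $c_2=2$, $m=2$ and $b_1+3=b_0$; then $u_{ij}u_{kl}=u_{kl}u_{ij}$ for all $i,j,k,l$ with $d(i,k)=d(j,l)=m$.
   Context: A connected regular graph $\Gamma=(V,E)$ of diameter $D$ is distance-regular with intersection array $\{b_0,\dots,b_{D-1};c_1,\dots,c_D\}$ if for any vertices $v,w$ with $d(v,w)=i$, exactly $b_i$ neighbors of $w$ are at distance $i+1$ from $v$ and exactly $c_i$ neighbors of $w$ are at distance $i-1$ from $v$ ($d$ the graph distance). $C(G_{aut}^+(\Gamma))$ is the universal unital $C^*$-algebra generated by $u_{ij}$, $i,j\in V=\{1,\dots,n\}$, with relations: (R1) $u_{ij}=u_{ij}^*=u_{ij}^2$; (R2) $\sum_{l} u_{il}=1=\sum_{l} u_{li}$ for all $i$; (R3) $u_{ij}u_{kl}=u_{kl}u_{ij}=0$ whenever exactly one of $(i,k)\in E$, $(j,l)\in E$ holds. *)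

theory Defs
  imports Complex_Main
begin

class unital_cstar_algebra = real_normed_algebra_1 + banach +
  fixes scaleC :: "complex \<Rightarrow> 'a \<Rightarrow> 'a"
    and adj :: "'a \<Rightarrow> 'a"
  assumes scaleC_add_right: "scaleC c (x + y) = scaleC c x + scaleC c y"
    and scaleC_add_left: "scaleC (c + d) x = scaleC c x + scaleC d x"
    and scaleC_scaleC: "scaleC c (scaleC d x) = scaleC (c * d) x"
    and scaleC_one: "scaleC 1 x = x"
    and scaleR_scaleC: "scaleR r x = scaleC (complex_of_real r) x"
    and norm_scaleC: "norm (scaleC c x) = cmod c * norm x"
    and mult_scaleC_left: "scaleC c x * y = scaleC c (x * y)"
    and mult_scaleC_right: "x * scaleC c y = scaleC c (x * y)"
    and adj_adj: "adj (adj x) = x"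
    and adj_add: "adj (x + y) = adj x + adj y"
    and adj_scaleC: "adj (scaleC c x) = scaleC (cnj c) (adj x)"
    and adj_mult: "adj (x * y) = adj y * adj x"
    and cstar_identity: "norm (adj x * x) = (norm x)\<^sup>2"

definition gdist :: "('v \<Rightarrow> 'v \<Rightarrow> bool) \<Rightarrow> 'v \<Rightarrow> 'v \<Rightarrow> nat" where
  "gdist E v w = (LEAST n. (E ^^ n) v w)"

definition simple_graph :: "('v \<Rightarrow> 'v \<Rightarrow> bool) \<Rightarrow> bool" where
  "simple_graph E \<longleftrightarrow> (\<forall>v w. E v w \<longrightarrow> E w v) \<and> (\<forall>v. \<not> E v v)"

definition connected_graph :: "('v \<Rightarrow> 'v \<Rightarrow> bool) \<Rightarrow> bool" where
  "connected_graph E \<longleftrightarrow> (\<forall>v w. \<exists>n. (E ^^ n) v w)"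

definition regular_graph :: "('v::finite \<Rightarrow> 'v \<Rightarrow> bool) \<Rightarrow> bool" where
  "regular_graph E \<longleftrightarrow> (\<exists>k. \<forall>v. card {w. E v w} = k)"

definition diameter :: "('v::finite \<Rightarrow> 'v \<Rightarrow> bool) \<Rightarrow> nat" where
  "diameter E = Max {gdist E v w | v w. True}"

definition distance_regular ::
  "('v::finite \<Rightarrow> 'v \<Rightarrow> bool) \<Rightarrow> nat \<Rightarrow> (nat \<Rightarrow> nat) \<Rightarrow> (nat \<Rightarrow> nat) \<Rightarrow> bool" where
  "distance_regular E D b c \<longleftrightarrow>
     simple_graph E \<and> connected_graph E \<and> regular_graph E \<and> diameter E = D \<and>
     (\<forall>v w. \<forall>i<D. gdist E v w = i \<longrightarrow> card {x. E w x \<and> gdist E v x = i + 1} = b i) \<and>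
     (\<forall>v w. \<forall>i. 1 \<le> i \<and> i \<le> D \<and> gdist E v w = i \<longrightarrow>
        card {x. E w x \<and> gdist E v x = i - 1} = c i)"

definition qaut_relations ::
  "('v::finite \<Rightarrow> 'v \<Rightarrow> bool) \<Rightarrow> ('v \<Rightarrow> 'v \<Rightarrow> 'a::unital_cstar_algebra) \<Rightarrow> bool" where
  "qaut_relations E u \<longleftrightarrow>
     (\<forall>i j. adj (u i j) = u i j \<and> u i j * u i j = u i j) \<and>
     (\<forall>i. (\<Sum>l\<in>UNIV. u i l) = 1 \<and> (\<Sum>l\<in>UNIV. u l i) = 1) \<and>
     (\<forall>i j k l. (E i k \<noteq> E j l) \<longrightarrow> u i j * u k l = 0 \<and> u k l * u i j = 0)"

end

theory Submission
  imports Defs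
begin


lemma module_scaleC: "module (scaleC :: complex \<Rightarrow> 'a::unital_cstar_algebra \<Rightarrow> 'a)"
  by unfold_locales (simp_all add: scaleC_add_right scaleC_add_left scaleC_scaleC scaleC_one)

lemma adj_one: "adj (1::'a::unital_cstar_algebra) = 1"
proof -
  have "adj (1::'a) = adj 1 * adj (adj 1)" by (simp add: adj_adj)
  also have "\<dots> = adj (adj 1 * 1)" by (simp only: adj_mult)
  also have "\<dots> = 1" by (simp add: adj_adj)
  finally show ?thesis .
qed

lemma adj_additive: "additive (adj :: 'a::unital_cstar_algebra \<Rightarrow> 'a)"
  by unfold_locales (rule adj_add)

lemma adj_zero: "adj (0::'a::unital_cstar_algebra) = 0"
  using additive.zero[OF adj_additive] .
lemma adj_minus: "adj (- x) = - adj (x::'a::unital_cstar_algebra)"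
  using additive.minus[OF adj_additive] .
lemma adj_diff: "adj (x - y) = adj x - adj (y::'a::unital_cstar_algebra)"
  using additive.diff[OF adj_additive] .
lemma adj_sum: "adj (sum g A) = (\<Sum>x\<in>A. adj (g x :: 'a::unital_cstar_algebra))"
  using additive.sum[OF adj_additive] .

lemma norm_sa_sq: "adj x = x \<Longrightarrow> norm (x * x) = (norm (x::'a::unital_cstar_algebra))\<^sup>2"
  using cstar_identity[of x] by simp

lemma norm_proj_le: assumes "adj p = p" "p * p = p" shows "norm (p::'a::unital_cstar_algebra) \<le> 1"
proof -
  have "norm p = (norm p)^2" using norm_sa_sq[OF assms(1)] assms(2) by simp
  then have "norm p = 0 \<or> norm p = 1" by (simp add: power2_eq_square)
  then show ?thesis by auto
qed

lemma pow2_le2_imp: fixes x :: real assumes "x \<ge> 0" "\<And>k. x ^ (2^k) \<le> 2" shows "x \<le> 1"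
proof (rule ccontr)
  assume "\<not> x \<le> 1"
  then have x1: "x > 1" by simp
  obtain n :: nat where n: "1 < real n * (x - 1)"
    using reals_Archimedean3[of "x - 1"] x1 by auto
  have "1 + real (2^n) * (x - 1) \<le> (1 + (x - 1)) ^ (2^n)"
    using Bernoulli_inequality[of "x - 1" "2^n"] x1 by simp
  moreover have "real n \<le> real (2^n)" by (simp add: less_imp_le)
  then have "real n * (x - 1) \<le> real (2^n) * (x - 1)" using x1 by (intro mult_right_mono) auto
  ultimately have "2 < x ^ (2^n)" using n by simp
  with assms(2)[of n] show False by simp
qed


lemma orth_sum_norm:
  fixes G :: "'a::unital_cstar_algebra"
  assumes G: "adj G = G" "G * G = G"
  shows "adj H = H \<Longrightarrow> G * H = 0 \<Longrightarrow> H * G = 0 \<Longrightarrow> norm H \<le> 1 \<Longrightarrow> norm (G + H) \<le> 1"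
proof -
  have main: "\<And>H. adj H = H \<Longrightarrow> G * H = 0 \<Longrightarrow> H * G = 0 \<Longrightarrow> norm H \<le> 1 \<Longrightarrow> norm (G + H) ^ (2^k) \<le> 2" for k
  proof (induction k)
    case 0
    have "norm (G + H) \<le> norm G + norm H" by (rule norm_triangle_ineq)
    also have "\<dots> \<le> 2" using norm_proj_le[OF G] 0 by simp
    finally show ?case by simp
  next
    case (Suc k)
    have sq: "(G + H) * (G + H) = G + H * H"
      using Suc.prems G by (simp add: distrib_left distrib_right)
    have sa: "adj (G + H) = G + H" using Suc.prems G by (simp add: adj_add)
    have "norm (G + H) ^ (2 ^ Suc k) = (norm (G + H)^2) ^ (2^k)"
      by (simp add: power_mult[symmetric] mult.commute)
    also have "norm (G + H)^2 = norm (G + H * H)" using norm_sa_sq[OF sa] sq by simp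
    also have "norm (G + H * H) ^ (2^k) \<le> 2"
    proof (rule Suc.IH)
      show "adj (H * H) = H * H" using Suc.prems by (simp add: adj_mult)
      have "G * (H * H) = (G * H) * H" by (simp only: mult.assoc)
      then show "G * (H * H) = 0" using Suc.prems by simp
      have "H * H * G = H * (H * G)" by (simp only: mult.assoc)
      then show "H * H * G = 0" using Suc.prems by simp
      have "norm (H * H) \<le> norm H * norm H" by (rule norm_mult_ineq)
      also have "\<dots> \<le> 1" using Suc.prems by (simp add: mult_le_one)
      finally show "norm (H * H) \<le> 1" .
    qed
    finally show ?case .
  qed
  assume "adj H = H" "G * H = 0" "H * G = 0" "norm H \<le> 1"
  then show ?thesis using pow2_le2_imp[of "norm (G + H)"] main by auto
qed

lemma pos_proj_sandwich:
  fixes e f :: "'a::unital_cstar_algebra"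
  assumes e: "adj e = e" "e * e = e" and f: "adj f = f" "f * f = f"
  shows "norm (1 - f * e * f) \<le> 1"
proof -
  have G: "adj (1 - f) = 1 - f" "(1 - f) * (1 - f) = 1 - f"
    using f by (simp_all add: adj_diff adj_one left_diff_distrib right_diff_distrib)
  have e': "adj (1 - e) = 1 - e" "(1 - e) * (1 - e) = 1 - e"
    using e by (simp_all add: adj_diff adj_one left_diff_distrib right_diff_distrib)
  have f1: "(1 - f) * f = 0" "f * (1 - f) = 0" using f by (simp_all add: left_diff_distrib right_diff_distrib)
  let ?H = "f * (1 - e) * f"
  have "adj ?H = ?H" using e' f by (simp add: adj_mult mult.assoc)
  moreover have "(1 - f) * ?H = 0"
  proof -
    have "(1 - f) * ?H = ((1 - f) * f) * ((1 - e) * f)" by (simp only: mult.assoc)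
    then show ?thesis using f1 by simp
  qed
  moreover have "?H * (1 - f) = 0"
  proof -
    have "?H * (1 - f) = (f * (1 - e)) * (f * (1 - f))" by (simp only: mult.assoc)
    then show ?thesis using f1 by simp
  qed
  moreover have "norm ?H \<le> 1"
  proof -
    have "norm ?H \<le> norm (f * (1 - e)) * norm f" by (rule norm_mult_ineq)
    also have "\<dots> \<le> (norm f * norm (1 - e)) * norm f"
      by (intro mult_right_mono norm_mult_ineq norm_ge_zero)
    also have "\<dots> \<le> 1" using norm_proj_le[OF f] norm_proj_le[OF e'] by (simp add: mult_le_one)
    finally show ?thesis .
  qed
  ultimately have "norm ((1 - f) + ?H) \<le> 1" using orth_sum_norm[OF G] by blast
  moreover have "(1 - f) + ?H = 1 - f * e * f"
  proof -
    have "?H = f * f - f * e * f" by (simp add: right_diff_distrib left_diff_distrib)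
    then show ?thesis using f by simp
  qed
  ultimately show ?thesis by simp
qed


lemma scaleC_zero_left [simp]: "scaleC 0 x = (0::'a::unital_cstar_algebra)"
  using module.scale_zero_left[OF module_scaleC] .
lemma scaleC_minus1: "scaleC (-1) x = - (x::'a::unital_cstar_algebra)"
  using module.scale_minus_left[OF module_scaleC, of 1 x] by (simp add: scaleC_one)
lemma scaleC_sum_left: "scaleC (sum f A) x = (\<Sum>i\<in>A. scaleC (f i) (x::'a::unital_cstar_algebra))"
  using module.scale_sum_left[OF module_scaleC] .
lemma scaleC_sum_right: "scaleC c (sum f A) = (\<Sum>i\<in>A. scaleC c (f i::'a::unital_cstar_algebra))"
  using module.scale_sum_right[OF module_scaleC] .
lemma of_real_scaleC: "(of_real r :: 'a::unital_cstar_algebra) = scaleC (complex_of_real r) 1"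
  by (simp add: of_real_def scaleR_scaleC)

definition Qf :: "'a::unital_cstar_algebra \<Rightarrow> complex \<Rightarrow> complex \<Rightarrow> complex \<Rightarrow> 'a" where
  "Qf a \<alpha> \<beta> \<gamma> = scaleC \<alpha> 1 + scaleC \<beta> a + scaleC \<gamma> (a * a)"

lemma Qf_comb: "scaleR r (Qf a \<alpha> \<beta> \<gamma>) + scaleR s (Qf a \<alpha>' \<beta>' \<gamma>') =
   Qf a (of_real r * \<alpha> + of_real s * \<alpha>') (of_real r * \<beta> + of_real s * \<beta>') (of_real r * \<gamma> + of_real s * \<gamma>')"
  unfolding Qf_def by (simp add: scaleR_scaleC scaleC_add_right scaleC_add_left scaleC_scaleC add_ac)

lemma sq_form:
  fixes a :: "'a::unital_cstar_algebra"
  assumes sa: "adj a = a"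
  shows "adj (of_real T + scaleC z a) * (of_real T + scaleC z a) =
     Qf a (of_real (T*T)) (of_real T * (z + cnj z)) (cnj z * z)"
proof -
  have "adj (of_real T + scaleC z a) = scaleC (of_real T) 1 + scaleC (cnj z) a"
    by (simp add: adj_add adj_scaleC of_real_scaleC adj_one sa)
  then show ?thesis
    by (simp add: of_real_scaleC Qf_def distrib_left distrib_right mult_scaleC_left mult_scaleC_right
        scaleC_scaleC scaleC_add_left scaleC_add_right add_ac mult.commute)
qed

lemma norm_scaleR_le: "0 \<le> r \<Longrightarrow> norm y \<le> B \<Longrightarrow> norm (scaleR r (y::'a::real_normed_vector)) \<le> r * B"
  by (simp add: mult_left_mono)

lemma unit_rot:
  fixes a :: "'a::unital_cstar_algebra"
  assumes sa: "adj a = a" and T: "T \<ge> 0"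
    and n1: "norm (of_real T + a) \<le> T" and n2: "norm (of_real T - a) \<le> T"
    and z: "cmod z = 1"
  shows "norm (of_real T + scaleC z a) \<le> T"
proof -
  define c where "c = Re z"
  have c: "-1 \<le> c" "c \<le> 1" using abs_Re_le_cmod[of z] z unfolding c_def by auto
  have y1: "norm (adj (of_real T + scaleC 1 a) * (of_real T + scaleC 1 a)) \<le> T^2"
    using cstar_identity[of "of_real T + scaleC 1 a"] n1 T by (simp add: scaleC_one power_mono)
  have y2: "norm (adj (of_real T + scaleC (-1) a) * (of_real T + scaleC (-1) a)) \<le> T^2"
    using cstar_identity[of "of_real T + scaleC (-1) a"] n2 T by (simp add: scaleC_minus1 power_mono)
  have zz: "cnj z * z = 1" using z by (metis complex_norm_square mult.commute of_real_1 power_one)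
  have zc: "z + cnj z = of_real (2 * c)" unfolding c_def by (simp add: complex_add_cnj)
  have eq: "adj (of_real T + scaleC z a) * (of_real T + scaleC z a) =
     scaleR ((1 + c)/2) (adj (of_real T + scaleC 1 a) * (of_real T + scaleC 1 a)) +
     scaleR ((1 - c)/2) (adj (of_real T + scaleC (-1) a) * (of_real T + scaleC (-1) a))"
    unfolding sq_form[OF sa] Qf_comb zz zc
    by (simp add: field_simps)
  have "(norm (of_real T + scaleC z a))^2 = norm (adj (of_real T + scaleC z a) * (of_real T + scaleC z a))"
    by (rule cstar_identity[symmetric])
  also have "\<dots> \<le> norm (scaleR ((1 + c)/2) (adj (of_real T + scaleC 1 a) * (of_real T + scaleC 1 a))) +
     norm (scaleR ((1 - c)/2) (adj (of_real T + scaleC (-1) a) * (of_real T + scaleC (-1) a)))"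
    unfolding eq by (rule norm_triangle_ineq)
  also have "\<dots> \<le> ((1 + c)/2) * T^2 + ((1 - c)/2) * T^2"
    using c y1 y2 by (intro add_mono norm_scaleR_le) auto
  also have "\<dots> = T^2" by (simp add: field_simps)
  finally show ?thesis using T by (rule power2_le_imp_le)
qed


lemma binom_scaleC:
  fixes a :: "'a::unital_cstar_algebra"
  shows "(of_real T + scaleC z a)^n =
    (\<Sum>j\<le>n. scaleC (of_nat (n choose j) * complex_of_real T^(n-j) * z^j) (a^j))"
proof (induction n)
  case 0
  then show ?case by (simp add: scaleC_one)
next
  case (Suc n)
  define c where "c j = of_nat (n choose j) * complex_of_real T^(n-j) * z^j" for j
  define g where "g j = scaleC (complex_of_real T * c j) (a^j)" for j
  define h where "h j = scaleC (z * c j) (a^Suc j)" for j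
  define f where "f j = scaleC (of_nat (Suc n choose j) * complex_of_real T^(Suc n-j) * z^j) (a^j)" for j
  have "(of_real T + scaleC z a)^Suc n = (of_real T + scaleC z a) * (\<Sum>j\<le>n. scaleC (c j) (a^j))"
    using Suc.IH by (simp add: c_def)
  also have "\<dots> = (\<Sum>j\<le>n. g j) + (\<Sum>j\<le>n. h j)"
    by (simp add: g_def h_def distrib_right sum_distrib_left sum.distrib of_real_scaleC
         mult_scaleC_left mult_scaleC_right scaleC_scaleC scaleC_add_right mult.commute)
  also have "(\<Sum>j\<le>n. g j) = (\<Sum>j\<le>Suc n. g j)"
    by (simp add: g_def c_def binomial_eq_0)
  also have "\<dots> = g 0 + (\<Sum>j\<le>n. g (Suc j))"
    by (rule sum.atMost_Suc_shift)
  also have "g 0 + (\<Sum>j\<le>n. g (Suc j)) + (\<Sum>j\<le>n. h j) = f 0 + (\<Sum>j\<le>n. f (Suc j))"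
  proof -
    have "f (Suc j) = g (Suc j) + h j" if "j \<le> n" for j
    proof (cases "j = n")
      case True
      then show ?thesis by (simp add: f_def g_def h_def c_def scaleC_add_left[symmetric] binomial_eq_0)
    next
      case False
      then have jn: "Suc j \<le> n" using that by simp
      have pw: "complex_of_real T * complex_of_real T ^ (n - Suc j) = complex_of_real T ^ (n - j)"
        using jn by (metis Suc_diff_Suc Suc_le_lessD power_Suc)
      have "f (Suc j) = scaleC ((of_nat (n choose Suc j) * complex_of_real T ^ (n - j) * z ^ Suc j)
            + (z * c j)) (a ^ Suc j)"
        unfolding f_def c_def by (simp add: algebra_simps)
      also have "\<dots> = g (Suc j) + h j"
        unfolding g_def h_def scaleC_add_left[symmetric] c_def
        by (simp only: pw[symmetric]) (simp add: algebra_simps)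
      finally show ?thesis .
    qed
    then have "(\<Sum>j\<le>n. f (Suc j)) = (\<Sum>j\<le>n. g (Suc j)) + (\<Sum>j\<le>n. h j)"
      by (simp add: sum.distrib)
    moreover have "f 0 = g 0" by (simp add: f_def g_def c_def)
    ultimately show ?thesis by (simp add: add_ac)
  qed
  also have "f 0 + (\<Sum>j\<le>n. f (Suc j)) = (\<Sum>j\<le>Suc n. f j)"
    by (rule sum.atMost_Suc_shift[symmetric])
  finally show ?case by (simp add: f_def)
qed


lemma root_pow_N: assumes "N > 0" shows "cis (2 * pi / real N) ^ N = 1"
  using assms by (simp add: DeMoivre)

lemma root_pow_ne1:
  assumes "0 < r" "r < N" shows "cis (2 * pi / real N) ^ r \<noteq> 1"
proof
  assume h: "cis (2 * pi / real N) ^ r = 1"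
  have N: "N > 0" using assms by simp
  have inj: "inj_on (\<lambda>k. cis (2 * pi * real k / real N)) {..<N}"
    using bij_betw_roots_unity[OF N] by (simp add: bij_betw_def)
  have "cis (2 * pi * real r / real N) = cis (2 * pi * real 0 / real N)"
    using h by (simp add: DeMoivre mult_ac)
  then have "r = 0" using inj assms by (auto simp: inj_on_def)
  with assms show False by simp
qed

lemma roots_sum:
  assumes N: "N \<ge> 2"
  shows "(\<Sum>k<N. (cis (2 * pi / real N) ^ m) ^ k) = (if N dvd m then of_nat N else 0)"
proof -
  define w where "w = cis (2 * pi / real N)"
  have wN: "w ^ N = 1" using root_pow_N[of N] N by (simp add: w_def)
  show ?thesis
  proof (cases "N dvd m")
    case True
    then obtain q where "m = N * q" by blast
    then have "w ^ m = 1" by (simp add: power_mult wN)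
    then show ?thesis using True by (simp add: w_def[symmetric])
  next
    case False
    define r where "r = m mod N"
    have r: "0 < r" "r < N" using False N unfolding r_def by (auto simp: dvd_eq_mod_eq_0)
    have "w ^ m = w ^ (N * (m div N) + r)" by (simp add: r_def)
    also have "\<dots> = w ^ r" by (simp add: power_add power_mult wN)
    finally have wm: "w ^ m = w ^ r" .
    have ne: "w ^ m \<noteq> 1" using wm root_pow_ne1[OF r] by (simp add: w_def)
    have "(w ^ m) ^ N = 1" by (simp add: power_mult[symmetric] mult.commute[of m] power_mult wN)
    then have "(\<Sum>k<N. (w ^ m) ^ k) = 0" using ne by (simp add: sum_gp_strict)
    then show ?thesis using False by (simp add: w_def)
  qed
qed

lemma avg_identity:
  fixes a :: "'a::unital_cstar_algebra"
  assumes N: "N \<ge> 2" and n: "n = N - 1"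
  defines "w \<equiv> cis (2 * pi / real N)"
  shows "(\<Sum>k<N. scaleC ((w^k)^n) ((of_real T + scaleC (w^k) a)^n)) =
     scaleC (of_nat N * of_nat n * complex_of_real T ^ (n - 1)) a"
proof -
  define C where "C j = of_nat (n choose j) * complex_of_real T^(n-j)" for j
  have "(\<Sum>k<N. scaleC ((w^k)^n) ((of_real T + scaleC (w^k) a)^n)) =
      (\<Sum>k<N. \<Sum>j\<le>n. scaleC (C j * (w ^ (n + j)) ^ k) (a^j))"
  proof (intro sum.cong refl)
    fix k
    have coef: "(w^k)^n * (c * (w^k)^j) = c * (w ^ (n + j)) ^ k" for c j
    proof -
      have "(w^k)^n * (c * (w^k)^j) = c * (w^(k*n) * w^(k*j))"
        by (simp add: power_mult[symmetric] mult_ac)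
      also have "\<dots> = c * (w ^ (n + j)) ^ k"
        by (simp add: power_add[symmetric] power_mult[symmetric] algebra_simps)
      finally show ?thesis .
    qed
    show "scaleC ((w^k)^n) ((of_real T + scaleC (w^k) a)^n) =
      (\<Sum>j\<le>n. scaleC (C j * (w ^ (n + j)) ^ k) (a^j))"
      unfolding binom_scaleC scaleC_sum_right scaleC_scaleC
      by (intro sum.cong refl) (metis (no_types) C_def coef mult.assoc)
  qed
  also have "\<dots> = (\<Sum>j\<le>n. \<Sum>k<N. scaleC (C j * (w ^ (n + j)) ^ k) (a^j))"
    by (rule sum.swap)
  also have "\<dots> = (\<Sum>j\<le>n. scaleC (C j * (\<Sum>k<N. (w ^ (n + j)) ^ k)) (a^j))"
    by (simp add: scaleC_sum_left sum_distrib_left)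
  also have "\<dots> = (\<Sum>j\<le>n. if j = 1 then scaleC (C 1 * of_nat N) a else 0)"
  proof (intro sum.cong refl)
    fix j assume j: "j \<in> {..n}"
    have iff: "N dvd (n + j) \<longleftrightarrow> j = 1"
    proof
      assume "N dvd (n + j)"
      then obtain q where q: "n + j = N * q" by blast
      have "n + j > 0" using n N by simp
      then have q0: "q \<noteq> 0" using q by (metis mult_0_right less_irrefl)
      have jn: "j \<le> n" using j by simp
      have "N * q < N * 2" using q n N jn by linarith
      then have "q < 2" by simp
      with q0 have "q = 1" by simp
      with q n N show "j = 1" by simp
    next
      assume "j = 1" then show "N dvd (n + j)" using n N by simp
    qed
    show "scaleC (C j * (\<Sum>k<N. (w ^ (n + j)) ^ k)) (a^j) =
        (if j = 1 then scaleC (C 1 * of_nat N) a else 0)"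
      unfolding w_def roots_sum[OF N] using iff by auto
  qed
  also have "\<dots> = scaleC (C 1 * of_nat N) a"
    using n N by (simp add: sum.delta) linarith
  finally show ?thesis using n by (simp add: C_def mult_ac)
qed


lemma sa_zero:
  fixes a :: "'a::unital_cstar_algebra"
  assumes sa: "adj a = a" and T: "T > 0"
    and n1: "norm (of_real T + a) \<le> T" and n2: "norm (of_real T - a) \<le> T"
  shows "a = 0"
proof -
  have bound: "real n * norm a \<le> T" if n1': "n \<ge> 1" for n
  proof -
    define N where "N = Suc n"
    have N: "N \<ge> 2" and nN: "n = N - 1" using n1' by (auto simp: N_def)
    define w where "w = cis (2 * pi / real N)"
    define S where "S = (\<Sum>k<N. scaleC ((w^k)^n) ((of_real T + scaleC (w^k) a)^n))"
    have "norm S \<le> (\<Sum>k<N. norm (scaleC ((w^k)^n) ((of_real T + scaleC (w^k) a)^n)))"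
      unfolding S_def by (rule norm_sum)
    also have "\<dots> \<le> (\<Sum>k<N. T ^ n)"
    proof (rule sum_mono)
      fix k
      have wk: "cmod (w ^ k) = 1" by (simp add: w_def norm_power)
      have "norm (scaleC ((w^k)^n) ((of_real T + scaleC (w^k) a)^n)) = norm ((of_real T + scaleC (w^k) a)^n)"
        by (simp add: norm_scaleC norm_power w_def)
      also have "\<dots> \<le> norm (of_real T + scaleC (w^k) a) ^ n" by (rule norm_power_ineq)
      also have "\<dots> \<le> T ^ n"
        using unit_rot[OF sa _ n1 n2 wk] T by (intro power_mono) auto
      finally show "norm (scaleC ((w^k)^n) ((of_real T + scaleC (w^k) a)^n)) \<le> T ^ n" .
    qed
    also have "\<dots> = real N * T ^ n" by simp
    finally have le: "norm S \<le> real N * T ^ n" .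
    have "S = scaleC (of_nat N * of_nat n * complex_of_real T ^ (n - 1)) a"
      unfolding S_def w_def by (rule avg_identity[OF N nN])
    then have "norm S = real N * real n * T ^ (n - 1) * norm a"
      using T by (simp add: norm_scaleC norm_mult norm_power)
    with le have "real N * (T ^ (n - 1) * (real n * norm a)) \<le> real N * (T ^ (n - 1) * T)"
      using n1' by (simp add: power_eq_if mult_ac split: if_splits)
    then have "T ^ (n - 1) * (real n * norm a) \<le> T ^ (n - 1) * T"
      using N by (simp add: mult_le_cancel_left)
    then show ?thesis using T by (simp add: mult_le_cancel_left)
  qed
  show "a = 0"
  proof (rule ccontr)
    assume "a \<noteq> 0"
    then have na: "norm a > 0" by simp
    obtain n :: nat where n: "T / norm a < real n" using reals_Archimedean2 by blast
    have "0 < T / norm a" using T na by simp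
    then have "n \<ge> 1" using n by (cases n) auto
    from bound[OF this] have "real n * norm a \<le> T" .
    moreover have "T < real n * norm a" using n na by (simp add: divide_less_eq)
    ultimately show False by simp
  qed
qed


lemma proj_orth:
  fixes e :: "'v::finite \<Rightarrow> 'a::unital_cstar_algebra"
  assumes P: "\<And>l. adj (e l) = e l" "\<And>l. e l * e l = e l"
    and S: "(\<Sum>l\<in>UNIV. e l) = 1" and jt: "j \<noteq> t"
  shows "e j * e t = 0"
proof -
  define f where "f = e j"
  have f: "adj f = f" "f * f = f" using P by (simp_all add: f_def)
  define a where "a l = f * e l * f" for l
  have suma: "(\<Sum>l\<in>UNIV. a l) = f"
  proof -
    have "(\<Sum>l\<in>UNIV. a l) = f * (\<Sum>l\<in>UNIV. e l) * f"
      by (simp add: a_def sum_distrib_left sum_distrib_right)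
    then show ?thesis using S f by simp
  qed
  have aj: "a j = f" using f by (simp add: a_def f_def)
  define R where "R = UNIV - {j, t}"
  have split: "(\<Sum>l\<in>UNIV. a l) = a j + (a t + (\<Sum>l\<in>R. a l))"
  proof -
    have "(\<Sum>l\<in>UNIV. a l) = a j + (\<Sum>l\<in>UNIV - {j}. a l)"
      by (simp add: sum.remove[of UNIV j])
    also have "(\<Sum>l\<in>UNIV - {j}. a l) = a t + (\<Sum>l\<in>UNIV - {j} - {t}. a l)"
      using jt by (subst sum.remove[of _ t]) auto
    also have "UNIV - {j} - {t} = R" by (auto simp: R_def)
    finally show ?thesis .
  qed
  have z: "a t + (\<Sum>l\<in>R. a l) = 0" using split suma aj by simp
  have sumR: "(\<Sum>l\<in>R. a l) = - a t" using z by (rule minus_unique[symmetric])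
  have pos: "norm (1 - a l) \<le> 1" for l
    unfolding a_def by (rule pos_proj_sandwich[OF P(1) P(2) f])
  define K where "K = card R"
  define T where "T = real K + 1"
  have T0: "T > 0" by (simp add: T_def)
  have ofK: "(of_real (real K) :: 'a) = (\<Sum>l\<in>R. 1)" by (simp add: K_def)
  have n2: "norm (of_real T - a t) \<le> T"
  proof -
    have "of_real T - a t = of_real (real K) + (1 - a t)" by (simp add: T_def)
    then have "norm (of_real T - a t) \<le> norm (of_real (real K) :: 'a) + norm (1 - a t)"
      by (metis norm_triangle_ineq)
    also have "\<dots> \<le> real K + 1" using pos[of t] by simp
    finally show ?thesis by (simp add: T_def)
  qed
  have n1: "norm (of_real T + a t) \<le> T"
  proof -
    have "(\<Sum>l\<in>R. (1 - a l)) = of_real (real K) + a t"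
      by (simp only: sum_subtractf ofK[symmetric] sumR diff_minus_eq_add)
    then have "of_real T + a t = 1 + (\<Sum>l\<in>R. (1 - a l))"
      by (simp add: T_def add_ac)
    then have "norm (of_real T + a t) \<le> norm (1::'a) + norm (\<Sum>l\<in>R. (1 - a l))"
      by (metis norm_triangle_ineq)
    also have "norm (\<Sum>l\<in>R. (1 - a l)) \<le> (\<Sum>l\<in>R. norm (1 - a l))" by (rule norm_sum)
    also have "\<dots> \<le> (\<Sum>l\<in>R. 1)" by (rule sum_mono) (rule pos)
    finally show ?thesis unfolding T_def K_def by simp
  qed
  have sat: "adj (a t) = a t" using P f by (simp add: a_def adj_mult mult.assoc)
  have at0: "a t = 0" by (rule sa_zero[OF sat T0 n1 n2])
  have "adj (e t * f) * (e t * f) = f * (e t * e t) * f"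
    by (simp only: adj_mult P(1) f(1) mult.assoc)
  then have "adj (e t * f) * (e t * f) = a t" by (simp only: P(2) a_def)
  then have "(norm (e t * f))^2 = 0" using at0 cstar_identity[of "e t * f"] by simp
  then have "e t * f = 0" by simp
  then have "adj (e t * f) = 0" by (simp add: adj_zero)
  then show ?thesis using P f by (simp add: adj_mult f_def)
qed



lemma relpowp_sym:
  assumes sym: "\<And>v w. E v w \<Longrightarrow> E w v"
  shows "(E ^^ n) v w \<Longrightarrow> (E ^^ n) w v"
proof (induction n arbitrary: v w)
  case 0 then show ?case by simp
next
  case (Suc n)
  from Suc.prems obtain y where y: "(E ^^ n) v y" "E y w" by (rule relpowp_Suc_E)
  have "(E ^^ n) y v" using Suc.IH[OF y(1)] .
  from relpowp_Suc_I2[OF sym[OF y(2)] this] show ?case .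
qed

lemma gdist_walk: "connected_graph E \<Longrightarrow> (E ^^ gdist E v w) v w"
  unfolding gdist_def connected_graph_def by (meson LeastI_ex)

lemma gdist_le: "(E ^^ n) v w \<Longrightarrow> gdist E v w \<le> n"
  unfolding gdist_def by (rule Least_le)

lemma gdist_min: "n < gdist E v w \<Longrightarrow> \<not> (E ^^ n) v w"
  unfolding gdist_def by (rule not_less_Least)

lemma gdist_sym:
  assumes "simple_graph E" "connected_graph E" shows "gdist E v w = gdist E w v"
proof -
  have sym: "\<And>v w. E v w \<Longrightarrow> E w v" using assms(1) by (simp add: simple_graph_def)
  have "gdist E w v \<le> gdist E v w"
    using gdist_le[of "gdist E v w" E w v] relpowp_sym[OF sym gdist_walk[OF assms(2), of v w]] by blast
  moreover have "gdist E v w \<le> gdist E w v"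
    using gdist_le[of "gdist E w v" E v w] relpowp_sym[OF sym gdist_walk[OF assms(2), of w v]] by blast
  ultimately show ?thesis by simp
qed

lemma gdist_self: "gdist E v v = 0"
  using gdist_le[of 0 E v v] by simp

lemma gdist_0_iff: "connected_graph E \<Longrightarrow> gdist E v w = 0 \<longleftrightarrow> v = w"
  using gdist_walk[of E v w] gdist_self[of E v] by auto

lemma gdist_1_iff:
  assumes "simple_graph E" "connected_graph E" shows "gdist E v w = 1 \<longleftrightarrow> E v w"
proof
  assume "gdist E v w = 1"
  then show "E v w" using gdist_walk[OF assms(2), of v w] by (metis relpowp_1)
next
  assume e: "E v w"
  then have "v \<noteq> w" using assms(1) by (auto simp: simple_graph_def)
  then have "gdist E v w \<noteq> 0" using gdist_0_iff[OF assms(2)] by simp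
  moreover have "gdist E v w \<le> 1" using e by (metis relpowp_1 gdist_le)
  ultimately show "gdist E v w = 1" by simp
qed

lemma walk2: "E v x \<Longrightarrow> E x w \<Longrightarrow> (E ^^ 2) v w"
  by (metis relpowp_Suc_I relpowp_Suc_0 numeral_2_eq_2)

lemma gdist_le2: "E v x \<Longrightarrow> E x w \<Longrightarrow> gdist E v w \<le> 2"
  using walk2 gdist_le by metis

lemma gdist_2:
  assumes "simple_graph E" "connected_graph E" "E v x" "E x w" "v \<noteq> w" "\<not> E v w"
  shows "gdist E v w = 2"
  using gdist_le2[of E v x w, OF assms(3,4)] gdist_0_iff[OF assms(2), of v w] gdist_1_iff[OF assms(1,2), of v w] assms(5,6)
  by linarith

section \<open>magic unitary facts\<close>

lemma qrel_proj: "qaut_relations E u \<Longrightarrow> adj (u i j) = u i j"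
  "qaut_relations E u \<Longrightarrow> u i j * u i j = u i j"
  by (simp_all add: qaut_relations_def)

lemma qrel_row: "qaut_relations E u \<Longrightarrow> (\<Sum>l\<in>UNIV. u i l) = 1"
  and qrel_col: "qaut_relations E u \<Longrightarrow> (\<Sum>l\<in>UNIV. u l i) = 1"
  by (simp_all add: qaut_relations_def)

lemma qrel_R3: "qaut_relations E u \<Longrightarrow> E i k \<noteq> E j l \<Longrightarrow> u i j * u k l = 0"
  and qrel_R3': "qaut_relations E u \<Longrightarrow> E i k \<noteq> E j l \<Longrightarrow> u k l * u i j = 0"
  by (simp_all add: qaut_relations_def)

lemma qrel_transpose: "qaut_relations E u \<Longrightarrow> qaut_relations E (\<lambda>a b. u b a)"
  unfolding qaut_relations_def by metis

lemma qrel_orth: "qaut_relations E u \<Longrightarrow> j \<noteq> t \<Longrightarrow> u i j * u i t = 0"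
  by (rule proj_orth[of "u i"]) (simp_all add: qaut_relations_def)

lemma qrel_walk:
  fixes u :: "'v::finite \<Rightarrow> 'v \<Rightarrow> 'a::unital_cstar_algebra"
  assumes rel: "qaut_relations E u"
  shows "(E ^^ n) i p \<Longrightarrow> \<not> (E ^^ n) j q \<Longrightarrow> u i j * u p q = 0"
proof (induction n arbitrary: p q)
  case 0
  then show ?case using qrel_orth[OF rel] by simp
next
  case (Suc n)
  from Suc.prems(1) obtain x where x: "(E ^^ n) i x" "E x p" by (rule relpowp_Suc_E)
  have "u i j * u p q = u i j * (\<Sum>y\<in>UNIV. u x y) * u p q" using qrel_row[OF rel] by simp
  also have "\<dots> = (\<Sum>y\<in>UNIV. u i j * u x y * u p q)"
    by (simp add: sum_distrib_left sum_distrib_right)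
  also have "\<dots> = 0"
  proof (rule sum.neutral, rule ballI)
    fix y
    show "u i j * u x y * u p q = 0"
    proof (cases "(E ^^ n) j y")
      case True
      have "\<not> E y q" using True Suc.prems(2) relpowp_Suc_I by metis
      then have "u x y * u p q = 0" using qrel_R3[OF rel, of x p y q] x(2) by simp
      then show ?thesis by (simp add: mult.assoc)
    next
      case False
      then have "u i j * u x y = 0" using Suc.IH[OF x(1)] by simp
      then show ?thesis by simp
    qed
  qed
  finally show ?case .
qed

lemma qrel_dist:
  fixes u :: "'v::finite \<Rightarrow> 'v \<Rightarrow> 'a::unital_cstar_algebra"
  assumes rel: "qaut_relations E u" and con: "connected_graph E"
    and ne: "gdist E i p \<noteq> gdist E j q"
  shows "u i j * u p q = 0"
proof (cases "gdist E i p < gdist E j q")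
  case True
  show ?thesis by (rule qrel_walk[OF rel gdist_walk[OF con] gdist_min[OF True]])
next
  case False
  then have lt: "gdist E j q < gdist E i p" using ne by simp
  have "(\<lambda>a b. u b a) j i * (\<lambda>a b. u b a) q p = 0"
    using qrel_walk[OF qrel_transpose[OF rel] gdist_walk[OF con] gdist_min[OF lt]] .
  then show ?thesis by simp
qed



theorem lemma3p8:
  fixes E :: "'v::finite \<Rightarrow> 'v \<Rightarrow> bool"
    and D m :: nat and b c :: "nat \<Rightarrow> nat"
    and u :: "'v \<Rightarrow> 'v \<Rightarrow> 'a::unital_cstar_algebra"
  assumes drg: "distance_regular E D b c"
    and rel: "qaut_relations E u"
    and m: "2 \<le> m" "m \<le> D" "c m \<ge> 2"
    and comm: "\<And>i j k l. gdist E i k = m - 1 \<Longrightarrow> gdist E j l = m - 1 \<Longrightarrow>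
                 u i j * u k l = u k l * u i j"
    and cases: "(c 2 = 1 \<and> b 1 + 1 = b 0) \<or> (c 2 = 1 \<and> b 1 + 2 = b 0)
                \<or> (c 2 = 2 \<and> m = 2 \<and> b 1 + 3 = b 0)"
  shows "\<And>i j k l. gdist E i k = m \<Longrightarrow> gdist E j l = m \<Longrightarrow>
                 u i j * u k l = u k l * u i j"
proof -
  fix i j k l
  assume dik: "gdist E i k = m" and djl: "gdist E j l = m"
  have simple: "simple_graph E" and con: "connected_graph E"
    and bcond: "\<And>v w i. i < D \<Longrightarrow> gdist E v w = i \<Longrightarrow> card {x. E w x \<and> gdist E v x = i + 1} = b i"
    and ccond: "\<And>v w i. 1 \<le> i \<Longrightarrow> i \<le> D \<Longrightarrow> gdist E v w = i \<Longrightarrow> card {x. E w x \<and> gdist E v x = i - 1} = c i"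
    using drg unfolding distance_regular_def by blast+
  have sym: "\<And>v w. E v w \<Longrightarrow> E w v" and irr: "\<And>v. \<not> E v v"
    using simple by (auto simp: simple_graph_def)
  have d1: "\<And>v w. gdist E v w = 1 \<longleftrightarrow> E v w" using gdist_1_iff[OF simple con] .
  have d0: "\<And>v w. gdist E v w = 0 \<longleftrightarrow> v = w" using gdist_0_iff[OF con] .
  have dsym: "\<And>v w. gdist E v w = gdist E w v" using gdist_sym[OF simple con] .
  have "card {x. E k x \<and> gdist E i x = m - 1} = c m" using ccond[of m i k] m dik by simp
  then have c2: "card {x. E k x \<and> gdist E i x = m - 1} \<ge> 2" using m by simp
  obtain p p' where pp: "E k p" "E k p'" "gdist E i p = m - 1" "gdist E i p' = m - 1" "p \<noteq> p'"
  proof -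
    let ?A = "{x. E k x \<and> gdist E i x = m - 1}"
    have "?A \<noteq> {}" using c2 by (metis card.empty not_numeral_le_zero)
    then obtain x where x: "x \<in> ?A" by blast
    have "card (?A - {x}) \<ge> 1" using c2 x by (simp add: card_Diff_singleton)
    then have "?A - {x} \<noteq> {}" by (metis card.empty not_one_le_zero)
    then obtain y where y: "y \<in> ?A - {x}" by blast
    show ?thesis using that[of x y] x y by auto
  qed
  have ki: "k \<noteq> i" using dik d0[of i k] m by auto
  have jl: "j \<noteq> l" using djl d0[of j l] m by auto
  define Cm where "Cm = {x. E p x \<and> E p' x}"
  have kC: "k \<in> Cm" using pp sym by (auto simp: Cm_def)
  have finC: "finite Cm" by simp
  have cardC: "card Cm = (if E p p' then b 0 - b 1 - 1 else c 2) \<and> (E p p' \<longrightarrow> b 0 = 1 + card Cm + b 1)"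
  proof (cases "E p p'")
    case True
    have deg: "card {x. E p' x} = b 0"
    proof -
      have "card {x. E p' x \<and> gdist E p' x = 0 + 1} = b 0" using bcond[of 0 p' p'] m gdist_self[of E p'] by simp
      moreover have "{x. E p' x \<and> gdist E p' x = 0 + 1} = {x. E p' x}" using d1 by auto
      ultimately show ?thesis by simp
    qed
    define B2 where "B2 = {x. E p' x \<and> gdist E p x = 2}"
    have cB2: "card B2 = b 1" using bcond[of 1 p p'] m True d1 by (simp add: B2_def numeral_2_eq_2)
    have part: "{x. E p' x} = insert p (Cm \<union> B2)"
    proof (rule set_eqI, rule iffI)
      fix x assume "x \<in> {x. E p' x}"
      then have x: "E p' x" by simp
      have "gdist E p x \<le> 2" using gdist_le2[of E p p' x] True x by simp
      then have "gdist E p x = 0 \<or> gdist E p x = 1 \<or> gdist E p x = 2" by auto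
      then show "x \<in> insert p (Cm \<union> B2)" using x d0 d1 sym by (auto simp: Cm_def B2_def)
    next
      fix x assume "x \<in> insert p (Cm \<union> B2)"
      then show "x \<in> {x. E p' x}" using True sym by (auto simp: Cm_def B2_def)
    qed
    have "p \<notin> Cm \<union> B2" using irr gdist_self[of E p] by (auto simp: Cm_def B2_def)
    moreover have "Cm \<inter> B2 = {}" 
    proof -
      have "gdist E p x \<noteq> 2" if "E p x" for x
      proof -
        have "gdist E p x = 1" using d1 that by simp
        then show ?thesis by simp
      qed
      then show ?thesis by (auto simp: Cm_def B2_def)
    qed
    ultimately have "card {x. E p' x} = 1 + card Cm + card B2"
      unfolding part by (simp add: card_Un_disjoint)
    then show ?thesis using deg cB2 True by simp
  next
    case False
    have "gdist E p p' = 2" using gdist_2[OF simple con, of p k p'] pp sym False by auto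
    then have "card {x. E p' x \<and> gdist E p x = 2 - 1} = c 2" using ccond[of 2 p p'] m by simp
    moreover have "{x. E p' x \<and> gdist E p x = 2 - 1} = Cm" using d1 sym by (auto simp: Cm_def)
    ultimately show ?thesis using False by simp
  qed
  have CN: "\<And>x. E p x \<Longrightarrow> E p' x \<Longrightarrow> x = k \<or> x = i"
  proof -
    fix x assume x: "E p x" "E p' x"
    then have xC: "x \<in> Cm" by (simp add: Cm_def)
    have pos: "card Cm > 0" using kC finC card_gt_0_iff by blast
    show "x = k \<or> x = i"
    proof (cases "c 2 = 2 \<and> m = 2 \<and> b 1 + 3 = b 0")
      case True
      have "card Cm = 2"
      proof (cases "E p p'")
        case True
        then have "b 0 = 1 + card Cm + b 1" using cardC by blast
        then show ?thesis using \<open>c 2 = 2 \<and> m = 2 \<and> b 1 + 3 = b 0\<close> by linarith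
      next
        case False
        then have "card Cm = c 2" using cardC by simp
        then show ?thesis using \<open>c 2 = 2 \<and> m = 2 \<and> b 1 + 3 = b 0\<close> by simp
      qed
      have "gdist E i p = 1" "gdist E i p' = 1" using pp True by simp_all
      then have "E i p" "E i p'" using d1 by blast+
      then have iC: "i \<in> Cm" using sym by (simp add: Cm_def)
      show ?thesis
      proof (rule ccontr)
        assume "\<not> (x = k \<or> x = i)"
        then have "card {k, i, x} = 3" using ki by auto
        moreover have "card {k, i, x} \<le> card Cm" using kC iC xC finC by (intro card_mono) auto
        ultimately show False using \<open>card Cm = 2\<close> by simp
      qed
    next
      case False
      then have ab: "c 2 = 1" "b 1 + 1 = b 0 \<or> b 1 + 2 = b 0" using cases by auto
      have "card Cm = 1"
      proof (cases "E p p'")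
        case True
        then have "b 0 = 1 + card Cm + b 1" using cardC by blast
        then show ?thesis using ab pos by linarith
      next
        case False
        then have "card Cm = c 2" using cardC by simp
        then show ?thesis using ab by simp
      qed
      then show ?thesis using kC xC by (metis card_1_singletonE singletonD)
    qed
  qed
  have commg: "\<And>a p j q. gdist E a p = m - 1 \<Longrightarrow> u a j * u p q = u p q * u a j"
  proof -
    fix a p j q assume h: "gdist E a p = m - 1"
    show "u a j * u p q = u p q * u a j"
    proof (cases "gdist E j q = m - 1")
      case True then show ?thesis using comm h by blast
    next
      case False
      have "u a j * u p q = 0" using qrel_dist[OF rel con] h False by simp
      moreover have "u p q * u a j = 0" using qrel_dist[OF rel con, of p a q j] h False dsym by simp
      ultimately show ?thesis by simp
    qed
  qed
  have orth: "\<And>a x y. x \<noteq> y \<Longrightarrow> u a x * u a y = 0" using qrel_orth[OF rel] by blast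
  have key: "\<And>t q q'. t \<noteq> j \<Longrightarrow> u i j * (u p q * u k l * u p' q') * u i t = 0"
  proof -
    fix t q q' assume tj: "t \<noteq> j"
    have c1: "u i j * u p q = u p q * u i j" using commg pp by blast
    have c2: "u p' q' * u i t = u i t * u p' q'" using commg[of i p' t q'] pp by simp
    show "u i j * (u p q * u k l * u p' q') * u i t = 0"
    proof (cases "E q l \<and> E q' l")
      case False
      then have "\<not> E q l \<or> \<not> E q' l" by simp
      then show ?thesis
      proof
        assume "\<not> E q l"
        then have "u p q * u k l = 0" using qrel_R3[OF rel, of p k q l] pp sym by auto
        then show ?thesis by simp
      next
        assume "\<not> E q' l"
        then have "u k l * u p' q' = 0" using qrel_R3[OF rel, of k p' l q'] pp sym by auto
        then show ?thesis by (simp add: mult.assoc)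
      qed
    next
      case True
      define F where "F x = u p q * u x l * u p' q'" for x
      have "u p q * u p' q' = u p q * (\<Sum>x\<in>UNIV. u x l) * u p' q'" using qrel_col[OF rel] by simp
      also have "\<dots> = (\<Sum>x\<in>UNIV. F x)" by (simp add: F_def sum_distrib_left sum_distrib_right)
      also have "\<dots> = (\<Sum>x\<in>{k, i}. F x)"
      proof (rule sum.mono_neutral_right)
        show "\<forall>x\<in>UNIV - {k, i}. F x = 0"
        proof
          fix x assume "x \<in> UNIV - {k, i}"
          then have "\<not> E p x \<or> \<not> E p' x" using CN by blast
          then show "F x = 0"
          proof
            assume "\<not> E p x"
            then have "u p q * u x l = 0" using qrel_R3[OF rel, of p x q l] True by auto
            then show ?thesis by (simp add: F_def)
          next
            assume "\<not> E p' x"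
            then have "u x l * u p' q' = 0" using qrel_R3[OF rel, of x p' l q'] True sym by auto
            then show ?thesis by (simp add: F_def mult.assoc)
          qed
        qed
      qed auto
      also have "\<dots> = F k + F i" using ki by simp
      finally have eq: "u p q * u k l * u p' q' = u p q * u p' q' - F i" by (simp add: F_def)
      have z1: "u i j * (u p q * u p' q') * u i t = 0"
      proof -
        have "u i j * (u p q * u p' q') * u i t = (u i j * u p q) * (u p' q' * u i t)"
          by (simp add: mult.assoc)
        also have "\<dots> = (u p q * u i j) * (u i t * u p' q')" by (simp only: c1 c2)
        also have "\<dots> = u p q * (u i j * u i t) * u p' q'" by (simp add: mult.assoc)
        also have "\<dots> = 0" using orth[of j t i] tj by simp
        finally show ?thesis .
      qed
      have z2: "u i j * F i * u i t = 0"
      proof -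
        have "u i j * F i * u i t = (u i j * u p q) * u i l * (u p' q' * u i t)"
          by (simp add: F_def mult.assoc)
        also have "\<dots> = (u p q * u i j) * u i l * (u i t * u p' q')" by (simp only: c1 c2)
        also have "\<dots> = u p q * (u i j * u i l) * (u i t * u p' q')" by (simp add: mult.assoc)
        also have "\<dots> = 0" using orth[of j l i] jl by simp
        finally show ?thesis .
      qed
      show ?thesis unfolding eq using z1 z2 by (simp add: left_diff_distrib right_diff_distrib)
    qed
  qed
  have W0: "\<And>t. t \<noteq> j \<Longrightarrow> u i j * u k l * u i t = 0"
  proof -
    fix t assume tj: "t \<noteq> j"
    have "u i j * u k l * u i t = u i j * ((\<Sum>q\<in>UNIV. u p q) * u k l * (\<Sum>q'\<in>UNIV. u p' q')) * u i t"
      by (simp add: qrel_row[OF rel])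
    also have "\<dots> = (\<Sum>q\<in>UNIV. \<Sum>q'\<in>UNIV. u i j * (u p q * u k l * u p' q') * u i t)"
      by (simp add: sum_distrib_left sum_distrib_right mult.assoc) (rule sum.swap)
    also have "\<dots> = 0" using key[OF tj] by simp
    finally show "u i j * u k l * u i t = 0" .
  qed
  define Y where "Y = u i j * u k l"
  have "Y = Y * (\<Sum>t\<in>UNIV. u i t)" using qrel_row[OF rel] by simp
  also have "\<dots> = (\<Sum>t\<in>UNIV. Y * u i t)" by (simp add: sum_distrib_left)
  also have "\<dots> = Y * u i j"
  proof -
    have "(\<Sum>t\<in>UNIV. Y * u i t) = Y * u i j + (\<Sum>t\<in>UNIV - {j}. Y * u i t)"
      by (simp add: sum.remove[of UNIV j])
    also have "(\<Sum>t\<in>UNIV - {j}. Y * u i t) = 0"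
      using W0 by (intro sum.neutral) (auto simp: Y_def)
    finally show ?thesis by simp
  qed
  finally have YY: "Y = Y * u i j" .
  have adjY: "adj Y = u k l * u i j" using qrel_proj[OF rel] by (simp add: Y_def adj_mult)
  have "adj Y = adj (Y * u i j)" by (rule arg_cong[OF YY])
  also have "\<dots> = u i j * adj Y" using qrel_proj[OF rel] by (simp add: adj_mult)
  also have "\<dots> = Y * u i j" unfolding adjY by (simp add: Y_def mult.assoc)
  also have "\<dots> = Y" by (rule YY[symmetric])
  finally have "adj Y = Y" .
  then show "u i j * u k l = u k l * u i j" using adjY by (simp add: Y_def)
qed


end
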